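(* Let $G$ be an abelian group that is torsion-free or cyclic of prime order. Let $A=\{a_1,\dots,a_{n+1}\}\subsetneq G$ be a proper subset of $G$ with $n+1$ distinct elements, and define $A_i=-a_i+A=\{-a_i+a: a\in A\}$ for $i\in[n]$. If $A$ is not a progression, then $\bigcap_{i\in[n]}A_i=\{0\}$.
   Context: A progression of length $k$ with difference $x$ and initial term $a$ ($x,a\in G$) is a subset of $G$ of the form $\{a,a+x,a+2x,\dots,a+(k-1)x\}$. *)

theory Defs
  imports "HOL-Computational_Algebra.Primes"
begin

definition nsmul :: "nat \<Rightarrow> 'a::ab_group_add \<Rightarrow> 'a" where
  "nsmul k x = (((+) x) ^^ k) 0"

definition torsion_free :: "'a::ab_group_add itself \<Rightarrow> bool" where
  "torsion_free _ \<longleftrightarrow> (\<forall>(x::'a) k. k > 0 \<longrightarrow> nsmul k x = 0 \<longrightarrow> x = 0)"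

definition cyclic_prime_order :: "'a::ab_group_add itself \<Rightarrow> bool" where
  "cyclic_prime_order _ \<longleftrightarrow> finite (UNIV :: 'a set) \<and> prime (card (UNIV :: 'a set)) \<and>
     (\<exists>g::'a. \<forall>y. \<exists>k. y = nsmul k g)"

definition progression :: "nat \<Rightarrow> 'a::ab_group_add \<Rightarrow> 'a \<Rightarrow> 'a set" where
  "progression k x a = {a + nsmul j x | j. j < k}"

definition is_progression :: "'a::ab_group_add set \<Rightarrow> bool" where
  "is_progression A \<longleftrightarrow> (\<exists>k x a. A = progression k x a)"

end

theory Submission
  imports Defs "HOL-Algebra.Multiplicative_Group"
begin

definition addG :: "'a::ab_group_add monoid" where
  "addG = \<lparr>carrier = UNIV, monoid.mult = (+), one = 0\<rparr>"

lemma addG_group: "group (addG :: 'a::ab_group_add monoid)"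
  unfolding addG_def
  by (rule groupI) (auto simp: add.assoc intro: exI[of _ "- _"])

lemma addG_pow: "x [^]\<^bsub>addG\<^esub> k = nsmul k (x::'a::ab_group_add)"
  by (induction k) (auto simp: nsmul_def addG_def add.commute)

lemma nsmul_add: "nsmul (i + j) x = nsmul i x + nsmul j (x::'a::ab_group_add)"
  by (induction i) (auto simp: nsmul_def add.assoc)

lemma torsion:
  fixes x :: "'a::ab_group_add" and A :: "'a set"
  assumes G: "torsion_free TYPE('a) \<or> cyclic_prime_order TYPE('a)"
    and fin: "finite A" and prp: "A \<noteq> UNIV" and x: "x \<noteq> 0" and d: "0 < d" "d \<le> card A"
  shows "nsmul d x \<noteq> 0"
  using G
proof
  assume "torsion_free TYPE('a)" then show ?thesis using x d unfolding torsion_free_def by blast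
next
  assume c: "cyclic_prime_order TYPE('a)"
  then have fU: "finite (UNIV::'a set)" and p: "prime (card (UNIV::'a set))"
    unfolding cyclic_prime_order_def by auto
  have "card A < card (UNIV::'a set)" using fU prp by (simp add: psubset_card_mono psubsetI)
  with d have dp: "d < card (UNIV::'a set)" by simp
  interpret group "addG :: 'a monoid" by (rule addG_group)
  have xc: "x \<in> carrier (addG :: 'a monoid)" by (simp add: addG_def)
  have "ord x dvd card (UNIV::'a set)"
    using ord_dvd_group_order[OF xc] by (simp add: order_def addG_def)
  then have o: "ord x = 1 \<or> ord x = card (UNIV::'a set)" using p prime_nat_iff by blast
  have "ord x \<noteq> 1" using ord_eq_1[OF xc] x by (simp add: addG_def)
  with o have "ord x = card (UNIV::'a set)" by simp
  show ?thesis
  proof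
    assume "nsmul d x = 0"
    moreover have "\<one>\<^bsub>(addG :: 'a monoid)\<^esub> = 0" by (simp add: addG_def)
    ultimately have "ord x dvd d" using pow_eq_id[OF xc, of d] by (simp add: addG_pow)
    then show False using \<open>ord x = _\<close> dp d by (simp add: nat_dvd_not_less)
  qed
qed


lemma pigeon:
  assumes "finite S" and "\<And>i. i \<le> card S \<Longrightarrow> f i \<in> S"
  shows "\<exists>i j. i < j \<and> j \<le> card S \<and> f i = f j"
proof -
  have "f ` {0..card S} \<subseteq> S" using assms(2) by auto
  then have "card (f ` {0..card S}) \<le> card S" using assms(1) by (simp add: card_mono)
  then have "\<not> inj_on f {0..card S}" using card_image by fastforce
  then obtain i j where "i \<le> card S" "j \<le> card S" "i \<noteq> j" "f i = f j"
    unfolding inj_on_def by auto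
  then show ?thesis by (metis linorder_neqE_nat)
qed

lemma nsmul_diff:
  assumes "i < j" "nsmul i x = nsmul j (x::'a::ab_group_add)"
  shows "nsmul (j - i) x = 0"
proof -
  have "nsmul j x = nsmul i x + nsmul (j - i) x"
    using nsmul_add[of i "j - i" x] assms(1) by simp
  then show ?thesis using assms(2) by simp
qed

theorem lemma3p11:
  fixes a :: "nat \<Rightarrow> 'a::ab_group_add" and n :: nat and A :: "'a set"
  assumes G: "torsion_free TYPE('a) \<or> cyclic_prime_order TYPE('a)"
    and A_def: "A = a ` {1..n+1}"
    and distinct: "inj_on a {1..n+1}"
    and proper: "A \<noteq> UNIV"
    and notprog: "\<not> is_progression A"
  shows "(\<Inter>i\<in>{1..n}. (\<lambda>x. - a i + x) ` A) = {0}"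
proof
  show "{0} \<subseteq> (\<Inter>i\<in>{1..n}. (\<lambda>x. - a i + x) ` A)"
  proof
    fix w assume "w \<in> {0::'a}"
    then have w: "w = 0" by simp
    show "w \<in> (\<Inter>i\<in>{1..n}. (\<lambda>x. - a i + x) ` A)"
    proof
      fix i assume "i \<in> {1..n}"
      then have "a i \<in> A" using A_def by auto
      then show "w \<in> (\<lambda>x. - a i + x) ` A" using w by (intro image_eqI[of _ _ "a i"]) auto
    qed
  qed
next
  have finA: "finite A" using A_def by simp
  have cardA: "card A = n + 1" using A_def distinct by (simp add: card_image)
  show "(\<Inter>i\<in>{1..n}. (\<lambda>x. - a i + x) ` A) \<subseteq> {0}"
  proof
    fix z assume zI: "z \<in> (\<Inter>i\<in>{1..n}. (\<lambda>x. - a i + x) ` A)"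
    show "z \<in> {0}"
    proof (rule ccontr)
      assume "z \<notin> {0}"
      then have z0: "z \<noteq> 0" by simp
      define B where "B = a ` {1..n}"
      have step: "b + z \<in> A" if bB: "b \<in> B" for b
      proof -
        obtain i where i: "i \<in> {1..n}" "b = a i" using bB unfolding B_def by blast
        then obtain y where "y \<in> A" "z = - a i + y" using zI i(1) by blast
        then show ?thesis using i by (simp add: algebra_simps)
      qed
      have BA: "B \<subseteq> A" using A_def B_def by auto
      have cardB: "card B = n"
        using B_def distinct by (simp add: card_image inj_on_subset)
      have imgA: "(\<lambda>y. y + z) ` B \<subseteq> A" using step by auto
      have cardimg: "card ((\<lambda>y. y + z) ` B) = n"
        using cardB by (simp add: card_image inj_on_def)
      then have "(\<lambda>y. y + z) ` B \<noteq> A" using cardA by auto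
      with imgA obtain s where sA: "s \<in> A" and sn: "s \<notin> (\<lambda>y. y + z) ` B" by blast
      have "(\<lambda>y. y + z) ` B \<subseteq> A - {s}" using imgA sn by auto
      moreover have "card (A - {s}) = n" using cardA sA finA by simp
      ultimately have imgeq: "(\<lambda>y. y + z) ` B = A - {s}"
        using cardimg finA by (metis card_subset_eq finite_Diff)
      have bk: "y - z \<in> A" if "y \<in> A" "y \<noteq> s" for y
      proof -
        from that imgeq obtain b where "b \<in> B" "y = b + z" by (metis DiffI image_iff singletonD)
        then show ?thesis using BA by auto
      qed
      define f where "f = (\<lambda>i. s + nsmul i z)"
      define I where "I = {i. \<forall>i'\<le>i. f i' \<in> A}"
      have f0: "f 0 = s" by (simp add: f_def nsmul_def)
      have fSuc: "f (Suc i) = f i + z" for i by (simp add: f_def nsmul_def algebra_simps)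
      have I0: "0 \<in> I" using sA f0 by (simp add: I_def)
      have ISuc: "Suc i \<in> I" if "i \<in> I" "f (Suc i) \<in> A" for i
        using that unfolding I_def by (auto simp: le_Suc_eq)
      have fIA: "f ` I \<subseteq> A" unfolding I_def by auto
      have tors: "nsmul d z \<noteq> 0" if "0 < d" "d \<le> card A" for d
        using torsion[OF G finA proper z0 that] .
      have AfI: "A \<subseteq> f ` I"
      proof (rule ccontr)
        assume "\<not> A \<subseteq> f ` I"
        define R where "R = A - f ` I"
        obtain y0 where y0: "y0 \<in> R" using \<open>\<not> A \<subseteq> f ` I\<close> R_def by auto
        have finR: "finite R" using finA R_def by simp
        have closed: "y - z \<in> R" if "y \<in> R" for y
        proof -
          have yA: "y \<in> A" and yn: "y \<notin> f ` I" using that R_def by auto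
          have "y \<noteq> s" using yn I0 f0 by force
          then have yzA: "y - z \<in> A" using bk yA by simp
          have "y - z \<notin> f ` I"
          proof
            assume "y - z \<in> f ` I"
            then obtain i where i: "i \<in> I" "y - z = f i" by auto
            then have "f (Suc i) = y" using fSuc by (simp add: algebra_simps)
            then have "Suc i \<in> I" using ISuc i yA by simp
            then show False using yn \<open>f (Suc i) = y\<close> by force
          qed
          then show ?thesis using yzA R_def by simp
        qed
        have iter: "y0 - nsmul k z \<in> R" for k
        proof (induction k)
          case 0 then show ?case using y0 by (simp add: nsmul_def)
        next
          case (Suc k)
          have "y0 - nsmul (Suc k) z = (y0 - nsmul k z) - z" by (simp add: nsmul_def algebra_simps)
          then show ?case using closed[OF Suc] by metis
        qed
        obtain i j where ij: "i < j" "j \<le> card R" "y0 - nsmul i z = y0 - nsmul j z"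
          using pigeon[OF finR, of "\<lambda>k. y0 - nsmul k z"] iter by blast
        have "nsmul (j - i) z = 0" using nsmul_diff[of i j z] ij by simp
        moreover have "card R \<le> card A" using finA R_def by (simp add: card_mono)
        ultimately show False using tors[of "j - i"] ij by simp
      qed
      have Aeq: "A = f ` I" using AfI fIA by blast
      have finI: "finite I"
      proof (rule ccontr)
        assume inf: "infinite I"
        have "i \<in> I" for i
        proof -
          obtain j where "j \<in> I" "i \<le> j" using inf
            by (metis finite_nat_set_iff_bounded_le not_le_imp_less less_imp_le)
          then show ?thesis unfolding I_def by auto
        qed
        then have "f i \<in> A" for i using fIA by auto
        then obtain i j where ij: "i < j" "j \<le> card A" "f i = f j"
          using pigeon[OF finA, of f] by blast
        have "nsmul (j - i) z = 0" using nsmul_diff[of i j z] ij by (simp add: f_def)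
        then show False using tors[of "j - i"] ij by simp
      qed
      have Isub: "I \<subseteq> {..<card I}"
      proof
        fix i assume "i \<in> I"
        then have "{0..i} \<subseteq> I" unfolding I_def by auto
        then have "card {0..i} \<le> card I" using finI by (meson card_mono)
        then show "i \<in> {..<card I}" by simp
      qed
      have "I = {..<card I}" using Isub finI by (metis card_lessThan card_subset_eq finite_lessThan)
      then have "A = progression (card I) z s"
        using Aeq unfolding progression_def f_def by auto
      then show False using notprog unfolding is_progression_def by blast
    qed
  qed
qed

end
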